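(* Let $\kappa>\gamma\ge0$, $\chi\in\mathbb{R}$, and let $(\psi_1,\psi_2)(x,z)$ be a smooth solution, with $\psi_j,\psi_{j,x}$ decaying sufficiently fast as $|x|\to\infty$ so that all integrals below are finite and boundary terms vanish, of $$i\psi_{1,z}=-\psi_{1,xx}-\kappa\psi_2+i\gamma\psi_1+\chi(|\psi_1|^2+|\psi_2|^2)\psi_1,$$ $$i\psi_{2,z}=-\psi_{2,xx}-\kappa\psi_1-i\gamma\psi_2+\chi(|\psi_1|^2+|\psi_2|^2)\psi_2.$$ Define $S_0=\int_{\mathbb{R}}(|\psi_1|^2+|\psi_2|^2)dx$, $S_1=\int_{\mathbb{R}}(\psi_1^*\psi_2+\psi_2^*\psi_1)dx$, $S_2=i\int_{\mathbb{R}}(\psi_1^*\psi_2-\psi_2^*\psi_1)dx$, $S_3=\int_{\mathbb{R}}(|\psi_1|^2-|\psi_2|^2)dx$. Then $\dot S_0=2\gamma S_3$, $\dot S_1=0$, $\dot S_2=-2\kappa S_3$, $\dot S_3=2\gamma S_0+2\kappa S_2$; the quantities $S_1$ and $C=\kappa S_0+\gamma S_2$ are conserved; and with $\omega=\sqrt{\kappa^2-\gamma^2}$ there are constants $A_1,A_2$ such that $S_0(z)=\kappa C/\omega^2+A_1\cos(2\omega z)+A_2\sin(2\omega z)$. In particular $S_0$ is bounded in $z$.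
   Context: Overdot denotes $d/dz$. *)

theory Defs
  imports "HOL-Analysis.Analysis"
begin

text \<open>All of them are real quantities; S1, S2 are written as real
  parts of the (real-valued) complex expressions of the paper.\<close>

definition S0 :: "(real \<Rightarrow> real \<Rightarrow> complex) \<Rightarrow> (real \<Rightarrow> real \<Rightarrow> complex) \<Rightarrow> real \<Rightarrow> real" where
  "S0 p1 p2 z = (LINT x|lborel. (cmod (p1 x z))\<^sup>2 + (cmod (p2 x z))\<^sup>2)"

definition S1 :: "(real \<Rightarrow> real \<Rightarrow> complex) \<Rightarrow> (real \<Rightarrow> real \<Rightarrow> complex) \<Rightarrow> real \<Rightarrow> real" where
  "S1 p1 p2 z = (LINT x|lborel. Re (cnj (p1 x z) * p2 x z + cnj (p2 x z) * p1 x z))"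

definition S2 :: "(real \<Rightarrow> real \<Rightarrow> complex) \<Rightarrow> (real \<Rightarrow> real \<Rightarrow> complex) \<Rightarrow> real \<Rightarrow> real" where
  "S2 p1 p2 z = (LINT x|lborel. Re (\<i> * (cnj (p1 x z) * p2 x z - cnj (p2 x z) * p1 x z)))"

definition S3 :: "(real \<Rightarrow> real \<Rightarrow> complex) \<Rightarrow> (real \<Rightarrow> real \<Rightarrow> complex) \<Rightarrow> real \<Rightarrow> real" where
  "S3 p1 p2 z = (LINT x|lborel. (cmod (p1 x z))\<^sup>2 - (cmod (p2 x z))\<^sup>2)"

end

theory Submission
  imports Defs "HOL-Probability.Sinc_Integral"
begin


lemma integrable_w: "integrable lborel (\<lambda>x::real. inverse (1 + x\<^sup>2))"
  using integrable_inverse_1_plus_square by (simp add: set_integrable_def)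

lemma mvt_bound:
  fixes g g' :: "real \<Rightarrow> real"
  assumes D: "\<And>z. (g has_real_derivative g' z) (at z)"
    and B: "\<And>z. z \<in> {c-1..c+1} \<Longrightarrow> \<bar>g' z\<bar> \<le> W"
    and h: "\<bar>h\<bar> \<le> 1" "h \<noteq> 0"
  shows "\<bar>(g (c+h) - g c)/h\<bar> \<le> W"
proof (cases "h > 0")
  case True
  obtain \<xi> where "\<xi> > c" "\<xi> < c + h" "g (c+h) - g c = (c + h - c) * g' \<xi>"
    using MVT2[of c "c+h" g g'] D True by auto
  moreover have "\<bar>g' \<xi>\<bar> \<le> W" using B calculation h by auto
  ultimately show ?thesis using True by (simp add: abs_mult)
next
  case False
  then have hn: "h < 0" using h by auto
  obtain \<xi> where "\<xi> > c+h" "\<xi> < c" "g c - g (c+h) = (c - (c + h)) * g' \<xi>"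
    using MVT2[of "c+h" c g g'] D hn by auto
  moreover have "\<bar>g' \<xi>\<bar> \<le> W" using B calculation h by auto
  moreover have "(g (c+h) - g c)/h = g' \<xi>" using calculation(3) hn by (simp add: field_simps)
  ultimately show ?thesis by simp
qed

lemma deriv_under_int:
  fixes f f' :: "real \<Rightarrow> real \<Rightarrow> real"
  assumes D: "\<And>x z. ((\<lambda>z. f x z) has_real_derivative f' x z) (at z)"
    and mf: "\<And>z. (\<lambda>x. f x z) \<in> borel_measurable lborel"
    and mf': "\<And>z. (\<lambda>x. f' x z) \<in> borel_measurable lborel"
    and intf: "\<And>z. integrable lborel (\<lambda>x. f x z)"
    and bnd: "\<And>a b. \<exists>w. integrable lborel w \<and> (\<forall>x. \<forall>z\<in>{a..b}. \<bar>f' x z\<bar> \<le> w x)"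
  shows "((\<lambda>z. LINT x|lborel. f x z) has_real_derivative (LINT x|lborel. f' x z0)) (at z0)"
proof -
  obtain w where wi: "integrable lborel w" and wb: "\<And>x z. z \<in> {z0-1..z0+1} \<Longrightarrow> \<bar>f' x z\<bar> \<le> w x"
    using bnd[of "z0-1" "z0+1"] by blast
  show ?thesis unfolding DERIV_def
  proof (subst tendsto_at_iff_sequentially, intro allI impI)
    fix X :: "nat \<Rightarrow> real"
    assume X0: "\<forall>i. X i \<in> UNIV - {0}" and XL: "X \<longlonglongrightarrow> 0"
    have "((\<lambda>n. norm (X n)) \<longlongrightarrow> 0) sequentially" using tendsto_norm[OF XL] by simp
    then have "\<forall>\<^sub>F n in sequentially. norm (X n) < 1"
      by (rule order_tendstoD(2)) simp
    then obtain N where N: "\<And>n. n \<ge> N \<Longrightarrow> \<bar>X n\<bar> < 1" by (auto simp: eventually_sequentially)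
    define s where "s n x = (f x (z0 + X (n+N)) - f x z0) / X (n+N)" for n x
    have "(\<lambda>n. integral\<^sup>L lborel (s n)) \<longlonglongrightarrow> (LINT x|lborel. f' x z0)"
    proof (rule integral_dominated_convergence[where w=w])
      show "(\<lambda>x. f' x z0) \<in> borel_measurable lborel" by (rule mf')
      show "s n \<in> borel_measurable lborel" for n unfolding s_def using mf by measurable
      show "integrable lborel w" by fact
      show "AE x in lborel. (\<lambda>n. s n x) \<longlonglongrightarrow> f' x z0"
      proof (rule AE_I2)
        fix x
        have "(\<lambda>h. (f x (z0+h) - f x z0)/h) \<midarrow>0\<rightarrow> f' x z0" using D[of x z0] by (simp add: DERIV_def)
        moreover have "(\<lambda>n. X (n+N)) \<longlonglongrightarrow> 0" using XL by (rule LIMSEQ_ignore_initial_segment[where k=N, simplified])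
        moreover have "\<forall>i. X (i+N) \<in> UNIV - {0}" using X0 by auto
        ultimately have "((\<lambda>h. (f x (z0+h) - f x z0)/h) \<circ> (\<lambda>n. X (n+N))) \<longlonglongrightarrow> f' x z0"
          by (intro tendsto_at_iff_sequentially[THEN iffD1, rule_format]) auto
        then show "(\<lambda>n. s n x) \<longlonglongrightarrow> f' x z0" by (simp add: s_def o_def)
      qed
      show "AE x in lborel. norm (s n x) \<le> w x" for n
      proof (rule AE_I2)
        fix x
        have "\<bar>X (n+N)\<bar> \<le> 1" using N[of "n+N"] by auto
        moreover have "X (n+N) \<noteq> 0" using X0 by auto
        ultimately show "norm (s n x) \<le> w x"
          unfolding s_def real_norm_def
          using mvt_bound[where g="\<lambda>z. f x z" and g'="\<lambda>z. f' x z" and c=z0 and W="w x" and h="X (n+N)"] D wb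
          by blast
      qed
    qed
    moreover have "integral\<^sup>L lborel (s n) = ((LINT x|lborel. f x (z0 + X (n+N))) - (LINT x|lborel. f x z0)) / X (n+N)" for n
      unfolding s_def by (simp add: integral_diff intf)
    ultimately have "(\<lambda>n. ((\<lambda>h. ((LINT x|lborel. f x (z0 + h)) - (LINT x|lborel. f x z0)) / h) \<circ> X) (n + N)) \<longlonglongrightarrow> (LINT x|lborel. f' x z0)"
      by (simp add: o_def)
    then show "((\<lambda>h. ((LINT x|lborel. f x (z0 + h)) - (LINT x|lborel. f x z0)) / h) \<circ> X) \<longlonglongrightarrow> (LINT x|lborel. f' x z0)"
      by (rule LIMSEQ_offset)
  qed
qed

lemma ftc_zero:
  fixes G g :: "real \<Rightarrow> complex"
  assumes "\<And>x. (G has_vector_derivative g x) (at x)" "\<And>x. isCont g x"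
    "integrable lborel g" "(G \<longlongrightarrow> 0) at_top" "(G \<longlongrightarrow> 0) at_bot"
  shows "integral\<^sup>L lborel g = 0"
proof -
  have "(LBINT x=-\<infinity>..\<infinity>. g x) = 0 - 0"
    by (rule interval_integral_FTC_integrable[where F=G])
       (use assms in \<open>auto simp: set_integrable_def ereal_tendsto_simps1\<close>)
  then show ?thesis by (simp add: interval_lebesgue_integral_def set_lebesgue_integral_def)
qed



lemma pz_form:
  fixes \<kappa> \<gamma> chi :: real and az axx b a :: complex and n :: real
  assumes "\<i> * az = - axx - of_real \<kappa> * b + \<i> * of_real \<gamma> * a + of_real (chi * n) * a"
  shows "az = \<i> * axx + \<i> * of_real \<kappa> * b + of_real \<gamma> * a - \<i> * of_real (chi * n) * a"
proof -
  have "az = - \<i> * (\<i> * az)" by simp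
  also have "\<dots> = \<i> * axx + \<i> * of_real \<kappa> * b + of_real \<gamma> * a - \<i> * of_real (chi * n) * a"
    unfolding assms by (simp add: algebra_simps)
  finally show ?thesis .
qed

lemma id0:
  fixes \<kappa> \<gamma> chi n :: real and a b ax bx axx bxx az bz :: complex
  assumes az: "az = \<i> * axx + \<i> * of_real \<kappa> * b + of_real \<gamma> * a - \<i> * of_real (chi * n) * a"
    and bz: "bz = \<i> * bxx + \<i> * of_real \<kappa> * a - of_real \<gamma> * b - \<i> * of_real (chi * n) * b"
  shows "Re (cnj a * az + cnj az * a + (cnj b * bz + cnj bz * b))
     = 2*\<gamma>*((cmod a)\<^sup>2 - (cmod b)\<^sup>2) - 2 * Im (cnj a * axx + cnj ax * ax + (cnj b * bxx + cnj bx * bx))"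
  unfolding az bz cmod_power2 by (simp add: algebra_simps power2_eq_square)

lemma id1:
  fixes \<kappa> \<gamma> chi n :: real and a b ax bx axx bxx az bz :: complex
  assumes az: "az = \<i> * axx + \<i> * of_real \<kappa> * b + of_real \<gamma> * a - \<i> * of_real (chi * n) * a"
    and bz: "bz = \<i> * bxx + \<i> * of_real \<kappa> * a - of_real \<gamma> * b - \<i> * of_real (chi * n) * b"
  shows "Re (cnj a * bz + cnj az * b + (cnj b * az + cnj bz * a))
     = - 2 * Im (cnj a * bxx + cnj ax * bx - (cnj ax * bx + cnj axx * b))"
  unfolding az bz cmod_power2 by (simp add: algebra_simps power2_eq_square)

lemma id2:
  fixes \<kappa> \<gamma> chi n :: real and a b ax bx axx bxx az bz :: complex
  assumes az: "az = \<i> * axx + \<i> * of_real \<kappa> * b + of_real \<gamma> * a - \<i> * of_real (chi * n) * a"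
    and bz: "bz = \<i> * bxx + \<i> * of_real \<kappa> * a - of_real \<gamma> * b - \<i> * of_real (chi * n) * b"
  shows "Re (\<i> * (cnj a * bz + cnj az * b - (cnj b * az + cnj bz * a)))
     = - 2 * \<kappa> * ((cmod a)\<^sup>2 - (cmod b)\<^sup>2) - 2 * Re (cnj a * bxx + cnj ax * bx - (cnj ax * bx + cnj axx * b))"
  unfolding az bz cmod_power2 by (simp add: algebra_simps power2_eq_square)

lemma id3:
  fixes \<kappa> \<gamma> chi n :: real and a b ax bx axx bxx az bz :: complex
  assumes az: "az = \<i> * axx + \<i> * of_real \<kappa> * b + of_real \<gamma> * a - \<i> * of_real (chi * n) * a"
    and bz: "bz = \<i> * bxx + \<i> * of_real \<kappa> * a - of_real \<gamma> * b - \<i> * of_real (chi * n) * b"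
  shows "Re (cnj a * az + cnj az * a - (cnj b * bz + cnj bz * b))
     = 2*\<gamma>*((cmod a)\<^sup>2 + (cmod b)\<^sup>2) + 2 * \<kappa> * Re (\<i> * (cnj a * b - cnj b * a))
       - 2 * Im (cnj a * axx + cnj ax * ax - (cnj b * bxx + cnj bx * bx))"
  unfolding az bz cmod_power2 by (simp add: algebra_simps power2_eq_square)

definition DEC :: "real set \<Rightarrow> (real \<Rightarrow> real \<Rightarrow> complex) \<Rightarrow> bool" where
  "DEC S g \<longleftrightarrow> (\<exists>K\<ge>0. \<forall>x. \<forall>z\<in>S. cmod (g x z) \<le> K * inverse (1 + x\<^sup>2))"

lemma w_props: "0 < inverse (1 + x\<^sup>2)" "inverse (1 + x\<^sup>2) \<le> (1::real)" "0 \<le> inverse (1 + x\<^sup>2)"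
  by (auto simp: add_pos_nonneg inverse_le_1_iff)

lemma DEC_add: "DEC S f \<Longrightarrow> DEC S g \<Longrightarrow> DEC S (\<lambda>x z. f x z + g x z)"
  unfolding DEC_def
proof (elim exE conjE, intro exI conjI ballI allI)
  fix K1 K2 x z assume "0 \<le> K1" "0 \<le> K2" "\<forall>x. \<forall>z\<in>S. cmod (f x z) \<le> K1 * inverse (1 + x\<^sup>2)"
    "\<forall>x. \<forall>z\<in>S. cmod (g x z) \<le> K2 * inverse (1 + x\<^sup>2)" "z \<in> S"
  then show "cmod (f x z + g x z) \<le> (K1 + K2) * inverse (1 + x\<^sup>2)"
    by (smt (verit, best) distrib_right norm_triangle_ineq)
qed (auto)

lemma DEC_minus: "DEC S f \<Longrightarrow> DEC S (\<lambda>x z. - f x z)"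
  unfolding DEC_def by simp

lemma DEC_diff: "DEC S f \<Longrightarrow> DEC S g \<Longrightarrow> DEC S (\<lambda>x z. f x z - g x z)"
  using DEC_add[of S f "\<lambda>x z. - g x z"] DEC_minus[of S g] by simp

lemma DEC_cnj: "DEC S f \<Longrightarrow> DEC S (\<lambda>x z. cnj (f x z))"
  unfolding DEC_def by simp

lemma DEC_mult: "DEC S f \<Longrightarrow> DEC S g \<Longrightarrow> DEC S (\<lambda>x z. f x z * g x z)"
  unfolding DEC_def
proof (elim exE conjE, intro exI conjI ballI allI)
  fix K1 K2 x z assume k: "0 \<le> K1" "0 \<le> K2" and f: "\<forall>x. \<forall>z\<in>S. cmod (f x z) \<le> K1 * inverse (1 + x\<^sup>2)"
    and g: "\<forall>x. \<forall>z\<in>S. cmod (g x z) \<le> K2 * inverse (1 + x\<^sup>2)" and z: "z \<in> S"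
  have "cmod (f x z * g x z) = cmod (f x z) * cmod (g x z)" by (simp add: norm_mult)
  also have "\<dots> \<le> (K1 * inverse (1 + x\<^sup>2)) * (K2 * inverse (1 + x\<^sup>2))"
    using f g z k w_props[of x] by (intro mult_mono) auto
  also have "\<dots> = (K1 * K2 * inverse (1 + x\<^sup>2)) * inverse (1 + x\<^sup>2)" by simp
  also have "\<dots> \<le> (K1 * K2 * inverse (1 + x\<^sup>2)) * 1"
    using w_props[of x] k by (intro mult_left_mono) auto
  finally show "cmod (f x z * g x z) \<le> K1 * K2 * inverse (1 + x\<^sup>2)" by simp
qed (use mult_nonneg_nonneg in auto)

lemma DEC_cmult: "DEC S f \<Longrightarrow> DEC S (\<lambda>x z. c * f x z)"
  unfolding DEC_def
proof (elim exE conjE, intro exI[of _ "cmod c * _"] conjI ballI allI)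
  fix K x z assume k: "0 \<le> K" and f: "\<forall>x. \<forall>z\<in>S. cmod (f x z) \<le> K * inverse (1 + x\<^sup>2)" and z: "z \<in> S"
  show "cmod (c * f x z) \<le> cmod c * K * inverse (1 + x\<^sup>2)"
    using f z by (simp add: norm_mult mult.assoc mult_left_mono)
qed (auto)

lemma DEC_mono: "DEC S f \<Longrightarrow> S' \<subseteq> S \<Longrightarrow> DEC S' f"
  unfolding DEC_def by blast

lemma DEC_integrable_real:
  fixes h :: "real \<Rightarrow> real"
  assumes "DEC {z} g" "continuous_on UNIV h" "\<And>x. \<bar>h x\<bar> \<le> cmod (g x z)"
  shows "integrable lborel h"
proof -
  obtain K where K: "K \<ge> 0" "\<And>x. cmod (g x z) \<le> K * inverse (1 + x\<^sup>2)" using assms(1) unfolding DEC_def by auto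
  show ?thesis
  proof (rule Bochner_Integration.integrable_bound[where f="\<lambda>x. K * inverse (1 + x\<^sup>2)"])
    show "integrable lborel (\<lambda>x. K * inverse (1 + x\<^sup>2))" using integrable_w by simp
    show "h \<in> borel_measurable lborel" using borel_measurable_continuous_onI[OF assms(2)] by simp
    show "AE x in lborel. norm (h x) \<le> norm (K * inverse (1 + x\<^sup>2))"
    proof (rule AE_I2)
      fix x have "0 \<le> K * inverse (1 + x\<^sup>2)" using K(1) w_props(3) by (rule mult_nonneg_nonneg)
      then show "norm (h x) \<le> norm (K * inverse (1 + x\<^sup>2))" using assms(3)[of x] K(2)[of x] by simp
    qed
  qed
qed

lemma DEC_integrable:
  assumes "DEC {z} g" "continuous_on UNIV (\<lambda>x. g x z)"
  shows "integrable lborel (\<lambda>x. g x z)"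
proof -
  obtain K where K: "K \<ge> 0" "\<And>x. cmod (g x z) \<le> K * inverse (1 + x\<^sup>2)" using assms(1) unfolding DEC_def by auto
  show ?thesis
  proof (rule Bochner_Integration.integrable_bound[where f="\<lambda>x. K * inverse (1 + x\<^sup>2)"])
    show "integrable lborel (\<lambda>x. K * inverse (1 + x\<^sup>2))" using integrable_w by simp
    show "(\<lambda>x. g x z) \<in> borel_measurable lborel" using borel_measurable_continuous_onI[OF assms(2)] by simp
    show "AE x in lborel. norm (g x z) \<le> norm (K * inverse (1 + x\<^sup>2))"
    proof (rule AE_I2)
      fix x have "0 \<le> K * inverse (1 + x\<^sup>2)" using K(1) w_props(3) by (rule mult_nonneg_nonneg)
      then show "norm (g x z) \<le> norm (K * inverse (1 + x\<^sup>2))" using K(2)[of x] by simp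
    qed
  qed
qed

lemma DEC_bound:
  fixes h :: "real \<Rightarrow> real \<Rightarrow> real"
  assumes "DEC {a..b} g" "\<And>x z. \<bar>h x z\<bar> \<le> cmod (g x z)"
  shows "\<exists>w. integrable lborel w \<and> (\<forall>x. \<forall>z\<in>{a..b}. \<bar>h x z\<bar> \<le> w x)"
proof -
  obtain K where K: "K \<ge> 0" "\<And>x z. z \<in> {a..b} \<Longrightarrow> cmod (g x z) \<le> K * inverse (1 + x\<^sup>2)"
    using assms(1) unfolding DEC_def by auto
  show ?thesis
    by (rule exI[of _ "\<lambda>x. K * inverse (1 + x\<^sup>2)"]) (use K assms(2) integrable_w order_trans in \<open>fastforce\<close>)
qed

lemma inv_sq_lim: "((\<lambda>x::real. inverse (1 + x\<^sup>2)) \<longlongrightarrow> 0) at_top" "((\<lambda>x::real. inverse (1 + x\<^sup>2)) \<longlongrightarrow> 0) at_bot"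
proof -
  have "filterlim (\<lambda>x::real. x\<^sup>2) at_top at_top"
    by (intro filterlim_pow_at_top filterlim_ident) auto
  then have "filterlim (\<lambda>x::real. 1 + x\<^sup>2) at_top at_top"
    by (rule filterlim_tendsto_add_at_top[OF tendsto_const])
  then show "((\<lambda>x::real. inverse (1 + x\<^sup>2)) \<longlongrightarrow> 0) at_top" by (rule tendsto_inverse_0_at_top)
  have "filterlim (\<lambda>x::real. x\<^sup>2) at_top at_bot"
    by (intro filterlim_pow_at_bot_even filterlim_ident) auto
  then have "filterlim (\<lambda>x::real. 1 + x\<^sup>2) at_top at_bot"
    by (rule filterlim_tendsto_add_at_top[OF tendsto_const])
  then show "((\<lambda>x::real. inverse (1 + x\<^sup>2)) \<longlongrightarrow> 0) at_bot" by (rule tendsto_inverse_0_at_top)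
qed

lemma DEC_tendsto:
  assumes "DEC {z} g"
  shows "((\<lambda>x. g x z) \<longlongrightarrow> 0) at_top" "((\<lambda>x. g x z) \<longlongrightarrow> 0) at_bot"
proof -
  obtain K where K: "K \<ge> 0" "\<And>x. cmod (g x z) \<le> K * inverse (1 + x\<^sup>2)" using assms(1) unfolding DEC_def by auto
  show "((\<lambda>x. g x z) \<longlongrightarrow> 0) at_top"
    by (rule Lim_null_comparison[where g="\<lambda>x. K * inverse (1 + x\<^sup>2)"])
       (use K inv_sq_lim(1) tendsto_mult_right_zero in auto)
  show "((\<lambda>x. g x z) \<longlongrightarrow> 0) at_bot"
    by (rule Lim_null_comparison[where g="\<lambda>x. K * inverse (1 + x\<^sup>2)"])
       (use K inv_sq_lim(2) tendsto_mult_right_zero in auto)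
qed

lemma vd_Re: "(g has_vector_derivative g') (at z) \<Longrightarrow> ((\<lambda>z. Re (g z)) has_real_derivative Re g') (at z)"
  unfolding has_vector_derivative_def has_field_derivative_def
  by (drule bounded_linear.has_derivative[OF bounded_linear_Re], erule has_derivative_eq_rhs) (auto simp: fun_eq_iff)

lemma vd_Im: "(g has_vector_derivative g') (at z) \<Longrightarrow> ((\<lambda>z. Im (g z)) has_real_derivative Im g') (at z)"
  unfolding has_vector_derivative_def has_field_derivative_def
  by (drule bounded_linear.has_derivative[OF bounded_linear_Im], erule has_derivative_eq_rhs) (auto simp: fun_eq_iff)

lemma slice_x: assumes "continuous_on UNIV (\<lambda>(x,z). f x z)" shows "continuous_on UNIV (\<lambda>x. f x z)"
proof -
  have "continuous_on UNIV ((\<lambda>(x,z). f x z) \<circ> (\<lambda>x. (x,z)))"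
  proof (rule continuous_on_compose)
    show "continuous_on UNIV (\<lambda>x. (x,z))" by (intro continuous_intros)
    show "continuous_on ((\<lambda>x. (x,z)) ` UNIV) (\<lambda>(x,z). f x z)" using assms by (rule continuous_on_subset) simp
  qed
  then show ?thesis by (simp add: o_def)
qed

lemma slice_z: assumes "continuous_on UNIV (\<lambda>(x,z). f x z)" shows "continuous_on UNIV (\<lambda>z. f x z)"
proof -
  have "continuous_on UNIV ((\<lambda>(x,z). f x z) \<circ> (\<lambda>z. (x,z)))"
  proof (rule continuous_on_compose)
    show "continuous_on UNIV (\<lambda>z. (x,z))" by (intro continuous_intros)
    show "continuous_on ((\<lambda>z. (x,z)) ` UNIV) (\<lambda>(x,z). f x z)" using assms by (rule continuous_on_subset) simp
  qed
  then show ?thesis by (simp add: o_def)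
qed

lemma pz_form2:
  fixes \<kappa> \<gamma> chi :: real and az axx b a :: complex and n :: real
  assumes "\<i> * az = - axx - of_real \<kappa> * b - \<i> * of_real \<gamma> * a + of_real (chi * n) * a"
  shows "az = \<i> * axx + \<i> * of_real \<kappa> * b - of_real \<gamma> * a - \<i> * of_real (chi * n) * a"
proof -
  have "az = - \<i> * (\<i> * az)" by simp
  also have "\<dots> = \<i> * axx + \<i> * of_real \<kappa> * b - of_real \<gamma> * a - \<i> * of_real (chi * n) * a"
    unfolding assms by (simp add: algebra_simps)
  finally show ?thesis .
qed

lemma deriv_Re_int:
  fixes Q Q' :: "real \<Rightarrow> real \<Rightarrow> complex"
  assumes D: "\<And>x z. ((\<lambda>z. Q x z) has_vector_derivative Q' x z) (at z)"
    and c: "\<And>z. continuous_on UNIV (\<lambda>x. Q x z)" and c': "\<And>z. continuous_on UNIV (\<lambda>x. Q' x z)"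
    and d: "\<And>a b. DEC {a..b} Q" and d': "\<And>a b. DEC {a..b} Q'"
  shows "((\<lambda>z. LINT x|lborel. Re (Q x z)) has_real_derivative (LINT x|lborel. Re (Q' x z0))) (at z0)"
proof (rule deriv_under_int[where f="\<lambda>x z. Re (Q x z)" and f'="\<lambda>x z. Re (Q' x z)"])
  show "((\<lambda>z. Re (Q x z)) has_real_derivative Re (Q' x z)) (at z)" for x z by (rule vd_Re[OF D])
  show "(\<lambda>x. Re (Q x z)) \<in> borel_measurable lborel" for z
    using borel_measurable_continuous_onI[OF continuous_on_Re[OF c]] by simp
  show "(\<lambda>x. Re (Q' x z)) \<in> borel_measurable lborel" for z
    using borel_measurable_continuous_onI[OF continuous_on_Re[OF c']] by simp
  show "integrable lborel (\<lambda>x. Re (Q x z))" for z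
    using d[of z z] by (intro DEC_integrable_real[where g=Q and z=z] continuous_on_Re c) (auto simp: abs_Re_le_cmod)
  show "\<exists>w. integrable lborel w \<and> (\<forall>x. \<forall>z\<in>{a..b}. \<bar>Re (Q' x z)\<bar> \<le> w x)" for a b
    by (rule DEC_bound[OF d']) (simp add: abs_Re_le_cmod)
qed

lemma flux:
  fixes G g :: "real \<Rightarrow> real \<Rightarrow> complex"
  assumes D: "\<And>x. ((\<lambda>x. G x z) has_vector_derivative g x z) (at x)"
    and c: "continuous_on UNIV (\<lambda>x. g x z)" and dg: "DEC {z} g" and dG: "DEC {z} G"
  shows "integral\<^sup>L lborel (\<lambda>x. g x z) = 0" "(LINT x|lborel. Im (g x z)) = 0" "(LINT x|lborel. Re (g x z)) = 0"
proof -
  have int: "integrable lborel (\<lambda>x. g x z)" by (rule DEC_integrable[OF dg c])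
  show z: "integral\<^sup>L lborel (\<lambda>x. g x z) = 0"
  proof (rule ftc_zero[where G="\<lambda>x. G x z"])
    show "isCont (\<lambda>x. g x z) x" for x using c by (simp add: continuous_on_eq_continuous_at)
  qed (use D int DEC_tendsto[OF dG] in auto)
  show "(LINT x|lborel. Im (g x z)) = 0"
    using integral_bounded_linear[OF bounded_linear_Im int] z by simp
  show "(LINT x|lborel. Re (g x z)) = 0"
    using integral_bounded_linear[OF bounded_linear_Re int] z by simp
qed

lemma DEC_Re_integrable:
  assumes "\<And>a b. DEC {a..b} Q" "continuous_on UNIV (\<lambda>x. Q x z)"
  shows "integrable lborel (\<lambda>x. Re (Q x z))" "integrable lborel (\<lambda>x. Im (Q x z))"
  using assms(1)[of z z] by (auto intro!: DEC_integrable_real[where g=Q and z=z] continuous_on_Re continuous_on_Im assms(2)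
      simp: abs_Re_le_cmod abs_Im_le_cmod)



lemma ode_part:
  fixes s0 s1 s2 s3 :: "real \<Rightarrow> real" and \<kappa> \<gamma> :: real
  assumes params: "\<kappa> > \<gamma>" "\<gamma> \<ge> 0"
    and D0: "\<And>z. (s0 has_real_derivative 2 * \<gamma> * s3 z) (at z)"
    and D1: "\<And>z. (s1 has_real_derivative 0) (at z)"
    and D2: "\<And>z. (s2 has_real_derivative - 2 * \<kappa> * s3 z) (at z)"
    and D3: "\<And>z. (s3 has_real_derivative 2 * \<gamma> * s0 z + 2 * \<kappa> * s2 z) (at z)"
  shows "(\<forall>z1 z2. s1 z1 = s1 z2)
       \<and> (\<forall>z1 z2. \<kappa> * s0 z1 + \<gamma> * s2 z1 = \<kappa> * s0 z2 + \<gamma> * s2 z2)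
       \<and> (let \<omega> = sqrt (\<kappa>\<^sup>2 - \<gamma>\<^sup>2); C = \<kappa> * s0 0 + \<gamma> * s2 0 in
            \<exists>A1 A2. \<forall>z. s0 z = \<kappa> * C / \<omega>\<^sup>2 + A1 * cos (2 * \<omega> * z) + A2 * sin (2 * \<omega> * z))
       \<and> bounded (range s0)"
proof -
  have c1: "\<forall>z1 z2. s1 z1 = s1 z2" using D1 DERIV_isconst_all by blast
  have dC: "((\<lambda>z. \<kappa> * s0 z + \<gamma> * s2 z) has_real_derivative 0) (at z)" for z
    by (rule DERIV_cong[OF DERIV_add[OF DERIV_cmult[OF D0] DERIV_cmult[OF D2]]]) (simp add: algebra_simps)
  have c2: "\<forall>z1 z2. \<kappa> * s0 z1 + \<gamma> * s2 z1 = \<kappa> * s0 z2 + \<gamma> * s2 z2"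
    using DERIV_isconst_all[of "\<lambda>z. \<kappa> * s0 z + \<gamma> * s2 z"] dC by blast
  define \<omega> where "\<omega> = sqrt (\<kappa>\<^sup>2 - \<gamma>\<^sup>2)"
  define C where "C = \<kappa> * s0 0 + \<gamma> * s2 0"
  have gs: "\<gamma> * s2 z = C - \<kappa> * s0 z" for z using c2 unfolding C_def by (metis add_diff_cancel_left')
  have "\<gamma>\<^sup>2 < \<kappa>\<^sup>2" using params by (simp add: power_strict_mono)
  then have wpos: "\<omega> > 0" and w2: "\<omega>\<^sup>2 = \<kappa>\<^sup>2 - \<gamma>\<^sup>2" unfolding \<omega>_def by auto
  define P where "P = \<kappa> * C / \<omega>\<^sup>2"
  have wP: "\<omega>\<^sup>2 * P = \<kappa> * C" unfolding P_def using wpos by simp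
  define A1 where "A1 = s0 0 - P"
  define A2 where "A2 = \<gamma> * s3 0 / \<omega>"
  define f where "f z = s0 z - (P + A1 * cos (2 * \<omega> * z) + A2 * sin (2 * \<omega> * z))" for z
  define h where "h z = 2 * \<gamma> * s3 z + 2 * \<omega> * A1 * sin (2 * \<omega> * z) - 2 * \<omega> * A2 * cos (2 * \<omega> * z)" for z
  have df: "(f has_real_derivative h z) (at z)" for z
    unfolding f_def[abs_def] h_def
    by (rule derivative_eq_intros D0 refl | simp add: algebra_simps)+
  have dh: "(h has_real_derivative (- 4 * \<omega>\<^sup>2 * f z)) (at z)" for z
  proof -
    have "(h has_real_derivative (2 * \<gamma> * (2 * \<gamma> * s0 z + 2 * \<kappa> * s2 z)
         + 2 * \<omega> * A1 * (cos (2 * \<omega> * z) * (2 * \<omega>)) + 2 * \<omega> * A2 * (sin (2 * \<omega> * z) * (2 * \<omega>)))) (at z)"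
      unfolding h_def[abs_def]
      by (rule derivative_eq_intros D3 refl | simp add: algebra_simps)+
    moreover have "2 * \<gamma> * (2 * \<gamma> * s0 z + 2 * \<kappa> * s2 z)
         + 2 * \<omega> * A1 * (cos (2 * \<omega> * z) * (2 * \<omega>)) + 2 * \<omega> * A2 * (sin (2 * \<omega> * z) * (2 * \<omega>))
         = - 4 * \<omega>\<^sup>2 * f z"
    proof -
      have "2 * \<gamma> * (2 * \<gamma> * s0 z + 2 * \<kappa> * s2 z) = 4 * \<gamma>\<^sup>2 * s0 z + 4 * \<kappa> * (\<gamma> * s2 z)"
        by (simp add: algebra_simps power2_eq_square)
      also have "\<dots> = 4 * \<gamma>\<^sup>2 * s0 z + 4 * \<kappa> * (C - \<kappa> * s0 z)" by (simp add: gs)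
      also have "\<dots> = - 4 * \<omega>\<^sup>2 * s0 z + 4 * (\<omega>\<^sup>2 * P)"
        unfolding wP unfolding w2 by (simp add: algebra_simps power2_eq_square)
      finally show ?thesis unfolding f_def by (simp add: algebra_simps power2_eq_square)
    qed
    ultimately show ?thesis by simp
  qed
  define E where "E z = (h z)\<^sup>2 + 4 * \<omega>\<^sup>2 * (f z)\<^sup>2" for z
  have dE: "(E has_real_derivative 0) (at z)" for z
  proof -
    have "(E has_real_derivative (2 * h z * (- 4 * \<omega>\<^sup>2 * f z) + 4 * \<omega>\<^sup>2 * (2 * f z * h z))) (at z)"
      unfolding E_def[abs_def]
      by (rule derivative_eq_intros df dh refl | simp add: algebra_simps)+
    then show ?thesis by (simp add: algebra_simps)
  qed
  have E0: "E 0 = 0" unfolding E_def h_def f_def A1_def A2_def using wpos by simp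
  have f0: "f z = 0" for z
  proof -
    have "E z = 0" using DERIV_isconst_all[of E z 0] dE E0 by simp
    then have "4 * \<omega>\<^sup>2 * (f z)\<^sup>2 = 0" unfolding E_def
      by (smt (verit) mult_nonneg_nonneg zero_le_power2)
    then show ?thesis using wpos by simp
  qed
  have form: "\<forall>z. s0 z = P + A1 * cos (2 * \<omega> * z) + A2 * sin (2 * \<omega> * z)"
    using f0 unfolding f_def by (simp add: algebra_simps)
  have bnd: "bounded (range s0)"
    unfolding bounded_iff
  proof (intro exI[of _ "\<bar>P\<bar> + \<bar>A1\<bar> + \<bar>A2\<bar>"] ballI)
    fix y assume "y \<in> range s0"
    then obtain z where y: "y = s0 z" by auto
    have a: "\<bar>A1 * cos (2 * \<omega> * z)\<bar> \<le> \<bar>A1\<bar>"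
      by (simp add: abs_mult mult_left_le)
    have b: "\<bar>A2 * sin (2 * \<omega> * z)\<bar> \<le> \<bar>A2\<bar>"
      by (simp add: abs_mult mult_left_le)
    show "norm y \<le> \<bar>P\<bar> + \<bar>A1\<bar> + \<bar>A2\<bar>" using form a b unfolding y real_norm_def
      by (smt (verit))
  qed
  show ?thesis
    unfolding Let_def using c1 c2 form bnd unfolding P_def C_def \<omega>_def by blast
qed



theorem mainTheorem7:
  fixes \<kappa> \<gamma> chi :: real
    and p1 p2 p1x p2x p1xx p2xx p1z p2z :: "real \<Rightarrow> real \<Rightarrow> complex"
  assumes params: "\<kappa> > \<gamma>" "\<gamma> \<ge> 0"
    and dx1: "\<And>x z. ((\<lambda>x. p1 x z) has_vector_derivative p1x x z) (at x)"
    and dx2: "\<And>x z. ((\<lambda>x. p2 x z) has_vector_derivative p2x x z) (at x)"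
    and dxx1: "\<And>x z. ((\<lambda>x. p1x x z) has_vector_derivative p1xx x z) (at x)"
    and dxx2: "\<And>x z. ((\<lambda>x. p2x x z) has_vector_derivative p2xx x z) (at x)"
    and dz1: "\<And>x z. ((\<lambda>z. p1 x z) has_vector_derivative p1z x z) (at z)"
    and dz2: "\<And>x z. ((\<lambda>z. p2 x z) has_vector_derivative p2z x z) (at z)"
    and smooth: "continuous_on UNIV (\<lambda>(x,z). p1 x z)" "continuous_on UNIV (\<lambda>(x,z). p2 x z)"
      "continuous_on UNIV (\<lambda>(x,z). p1x x z)" "continuous_on UNIV (\<lambda>(x,z). p2x x z)"
      "continuous_on UNIV (\<lambda>(x,z). p1xx x z)" "continuous_on UNIV (\<lambda>(x,z). p2xx x z)"
      "continuous_on UNIV (\<lambda>(x,z). p1z x z)" "continuous_on UNIV (\<lambda>(x,z). p2z x z)"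
    and eq1: "\<And>x z. \<i> * p1z x z = - p1xx x z - of_real \<kappa> * p2 x z + \<i> * of_real \<gamma> * p1 x z
                 + of_real (chi * ((cmod (p1 x z))\<^sup>2 + (cmod (p2 x z))\<^sup>2)) * p1 x z"
    and eq2: "\<And>x z. \<i> * p2z x z = - p2xx x z - of_real \<kappa> * p1 x z - \<i> * of_real \<gamma> * p2 x z
                 + of_real (chi * ((cmod (p1 x z))\<^sup>2 + (cmod (p2 x z))\<^sup>2)) * p2 x z"
    and decay: "\<And>a b. \<exists>M. \<forall>x. \<forall>z\<in>{a..b}.
                   cmod (p1 x z) + cmod (p1x x z) + cmod (p1z x z)
                 + cmod (p2 x z) + cmod (p2x x z) + cmod (p2z x z) \<le> M / (1 + x\<^sup>2)"
  shows "(\<forall>z. (S0 p1 p2 has_real_derivative 2 * \<gamma> * S3 p1 p2 z) (at z))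
       \<and> (\<forall>z. (S1 p1 p2 has_real_derivative 0) (at z))
       \<and> (\<forall>z. (S2 p1 p2 has_real_derivative - 2 * \<kappa> * S3 p1 p2 z) (at z))
       \<and> (\<forall>z. (S3 p1 p2 has_real_derivative 2 * \<gamma> * S0 p1 p2 z + 2 * \<kappa> * S2 p1 p2 z) (at z))
       \<and> (\<forall>z1 z2. S1 p1 p2 z1 = S1 p1 p2 z2)
       \<and> (\<forall>z1 z2. \<kappa> * S0 p1 p2 z1 + \<gamma> * S2 p1 p2 z1 = \<kappa> * S0 p1 p2 z2 + \<gamma> * S2 p1 p2 z2)
       \<and> (let \<omega> = sqrt (\<kappa>\<^sup>2 - \<gamma>\<^sup>2); C = \<kappa> * S0 p1 p2 0 + \<gamma> * S2 p1 p2 0 in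
            \<exists>A1 A2. \<forall>z. S0 p1 p2 z = \<kappa> * C / \<omega>\<^sup>2 + A1 * cos (2 * \<omega> * z) + A2 * sin (2 * \<omega> * z))
       \<and> bounded (range (S0 p1 p2))"
proof -
  have c1: "\<And>z. continuous_on UNIV (\<lambda>x. p1 x z)" by (rule slice_x[OF smooth(1)])
  have c2: "\<And>z. continuous_on UNIV (\<lambda>x. p2 x z)" by (rule slice_x[OF smooth(2)])
  have c1x: "\<And>z. continuous_on UNIV (\<lambda>x. p1x x z)" by (rule slice_x[OF smooth(3)])
  have c2x: "\<And>z. continuous_on UNIV (\<lambda>x. p2x x z)" by (rule slice_x[OF smooth(4)])
  have c1xx: "\<And>z. continuous_on UNIV (\<lambda>x. p1xx x z)" by (rule slice_x[OF smooth(5)])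
  have c2xx: "\<And>z. continuous_on UNIV (\<lambda>x. p2xx x z)" by (rule slice_x[OF smooth(6)])
  have c1z: "\<And>z. continuous_on UNIV (\<lambda>x. p1z x z)" by (rule slice_x[OF smooth(7)])
  have c2z: "\<And>z. continuous_on UNIV (\<lambda>x. p2z x z)" by (rule slice_x[OF smooth(8)])
  have p1z_eq: "\<And>x z. p1z x z = \<i> * p1xx x z + \<i> * of_real \<kappa> * p2 x z + of_real \<gamma> * p1 x z
      - \<i> * of_real (chi * ((cmod (p1 x z))\<^sup>2 + (cmod (p2 x z))\<^sup>2)) * p1 x z"
    by (rule pz_form[OF eq1])
  have p2z_eq: "\<And>x z. p2z x z = \<i> * p2xx x z + \<i> * of_real \<kappa> * p1 x z - of_real \<gamma> * p2 x z
      - \<i> * of_real (chi * ((cmod (p1 x z))\<^sup>2 + (cmod (p2 x z))\<^sup>2)) * p2 x z"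
    by (rule pz_form2[OF eq2])
  have base: "DEC {a..b} p1 \<and> DEC {a..b} p2 \<and> DEC {a..b} p1x \<and> DEC {a..b} p2x \<and> DEC {a..b} p1z \<and> DEC {a..b} p2z" for a b
  proof -
    obtain M where M: "\<And>x z. z \<in> {a..b} \<Longrightarrow> cmod (p1 x z) + cmod (p1x x z) + cmod (p1z x z)
                 + cmod (p2 x z) + cmod (p2x x z) + cmod (p2z x z) \<le> M / (1 + x\<^sup>2)"
      using decay[of a b] by blast
    have gen: "DEC {a..b} f" if f: "\<And>x z. z \<in> {a..b} \<Longrightarrow> cmod (f x z) \<le> M / (1 + x\<^sup>2)" for f
      unfolding DEC_def
    proof (intro exI[of _ "max M 0"] conjI allI ballI)
      fix x z assume z: "z \<in> {a..b}"
      have "cmod (f x z) \<le> M * inverse (1+x\<^sup>2)" using f[OF z] by (simp add: divide_inverse)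
      also have "\<dots> \<le> max M 0 * inverse (1+x\<^sup>2)" using w_props(3)[of x] by (intro mult_right_mono) auto
      finally show "cmod (f x z) \<le> max M 0 * inverse (1 + x\<^sup>2)" .
    qed simp
    have bnds: "cmod (p1 x z) \<le> M / (1 + x\<^sup>2) \<and> cmod (p2 x z) \<le> M / (1 + x\<^sup>2) \<and>
       cmod (p1x x z) \<le> M / (1 + x\<^sup>2) \<and> cmod (p2x x z) \<le> M / (1 + x\<^sup>2) \<and>
       cmod (p1z x z) \<le> M / (1 + x\<^sup>2) \<and> cmod (p2z x z) \<le> M / (1 + x\<^sup>2)" if z: "z \<in> {a..b}" for x z
    proof -
      note m = M[OF z, of x]
      have n: "0 \<le> cmod (p1 x z)" "0 \<le> cmod (p2 x z)" "0 \<le> cmod (p1x x z)" "0 \<le> cmod (p2x x z)"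
        "0 \<le> cmod (p1z x z)" "0 \<le> cmod (p2z x z)" by simp_all
      show ?thesis using m n by linarith
    qed
    show ?thesis by (intro conjI gen) (use bnds in blast)+
  qed
  have d1: "\<And>a b. DEC {a..b} p1" and d2: "\<And>a b. DEC {a..b} p2" and d1x: "\<And>a b. DEC {a..b} p1x"
    and d2x: "\<And>a b. DEC {a..b} p2x" and d1z: "\<And>a b. DEC {a..b} p1z" and d2z: "\<And>a b. DEC {a..b} p2z"
    using base by blast+
  have nrm: "complex_of_real (chi * ((cmod (p1 x z))\<^sup>2 + (cmod (p2 x z))\<^sup>2))
      = of_real chi * (cnj (p1 x z) * p1 x z + cnj (p2 x z) * p2 x z)" for x z
    unfolding cmod_power2 by (simp add: complex_eq_iff algebra_simps power2_eq_square)
  have xx1: "p1xx = (\<lambda>x z. - (\<i> * p1z x z) - of_real \<kappa> * p2 x z + (\<i> * of_real \<gamma>) * p1 x z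
      + of_real chi * ((cnj (p1 x z) * p1 x z + cnj (p2 x z) * p2 x z) * p1 x z))"
  proof (intro ext)
    fix x z
    show "p1xx x z = - (\<i> * p1z x z) - of_real \<kappa> * p2 x z + (\<i> * of_real \<gamma>) * p1 x z
      + of_real chi * ((cnj (p1 x z) * p1 x z + cnj (p2 x z) * p2 x z) * p1 x z)"
      unfolding eq1 mult.assoc[symmetric] nrm[symmetric] by (simp add: algebra_simps)
  qed
  have xx2: "p2xx = (\<lambda>x z. - (\<i> * p2z x z) - of_real \<kappa> * p1 x z - (\<i> * of_real \<gamma>) * p2 x z
      + of_real chi * ((cnj (p1 x z) * p1 x z + cnj (p2 x z) * p2 x z) * p2 x z))"
  proof (intro ext)
    fix x z
    show "p2xx x z = - (\<i> * p2z x z) - of_real \<kappa> * p1 x z - (\<i> * of_real \<gamma>) * p2 x z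
      + of_real chi * ((cnj (p1 x z) * p1 x z + cnj (p2 x z) * p2 x z) * p2 x z)"
      unfolding eq2 mult.assoc[symmetric] nrm[symmetric] by (simp add: algebra_simps)
  qed
  have d1xx: "\<And>a b. DEC {a..b} p1xx"
    unfolding xx1 by (intro DEC_add DEC_diff DEC_minus DEC_cmult DEC_mult DEC_cnj d1 d2 d1z)
  have d2xx: "\<And>a b. DEC {a..b} p2xx"
    unfolding xx2 by (intro DEC_add DEC_diff DEC_minus DEC_cmult DEC_mult DEC_cnj d1 d2 d2z)
  note decs = d1 d2 d1x d2x d1z d2z d1xx d2xx
  note DECI = DEC_add DEC_diff DEC_minus DEC_cmult DEC_mult DEC_cnj
  note conts = c1 c2 c1x c2x c1z c2z c1xx c2xx

  define Q0 where "Q0 = (\<lambda>x z. cnj (p1 x z) * p1 x z + cnj (p2 x z) * p2 x z)"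
  define Q1 where "Q1 = (\<lambda>x z. cnj (p1 x z) * p2 x z + cnj (p2 x z) * p1 x z)"
  define Q2 where "Q2 = (\<lambda>x z. \<i> * (cnj (p1 x z) * p2 x z - cnj (p2 x z) * p1 x z))"
  define Q3 where "Q3 = (\<lambda>x z. cnj (p1 x z) * p1 x z - cnj (p2 x z) * p2 x z)"
  define Q0' where "Q0' = (\<lambda>x z. cnj (p1 x z) * p1z x z + cnj (p1z x z) * p1 x z + (cnj (p2 x z) * p2z x z + cnj (p2z x z) * p2 x z))"
  define Q1' where "Q1' = (\<lambda>x z. cnj (p1 x z) * p2z x z + cnj (p1z x z) * p2 x z + (cnj (p2 x z) * p1z x z + cnj (p2z x z) * p1 x z))"
  define Q2' where "Q2' = (\<lambda>x z. \<i> * (cnj (p1 x z) * p2z x z + cnj (p1z x z) * p2 x z - (cnj (p2 x z) * p1z x z + cnj (p2z x z) * p1 x z)))"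
  define Q3' where "Q3' = (\<lambda>x z. cnj (p1 x z) * p1z x z + cnj (p1z x z) * p1 x z - (cnj (p2 x z) * p2z x z + cnj (p2z x z) * p2 x z))"
  define G0 where "G0 = (\<lambda>x z. cnj (p1 x z) * p1x x z + cnj (p2 x z) * p2x x z)"
  define G1 where "G1 = (\<lambda>x z. cnj (p1 x z) * p2x x z - cnj (p1x x z) * p2 x z)"
  define G3 where "G3 = (\<lambda>x z. cnj (p1 x z) * p1x x z - cnj (p2 x z) * p2x x z)"
  define g0 where "g0 = (\<lambda>x z. cnj (p1 x z) * p1xx x z + cnj (p1x x z) * p1x x z + (cnj (p2 x z) * p2xx x z + cnj (p2x x z) * p2x x z))"
  define g1 where "g1 = (\<lambda>x z. cnj (p1 x z) * p2xx x z + cnj (p1x x z) * p2x x z - (cnj (p1x x z) * p2x x z + cnj (p1xx x z) * p2 x z))"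
  define g3 where "g3 = (\<lambda>x z. cnj (p1 x z) * p1xx x z + cnj (p1x x z) * p1x x z - (cnj (p2 x z) * p2xx x z + cnj (p2x x z) * p2x x z))"

  have r0: "Re (Q0 x z) = (cmod (p1 x z))\<^sup>2 + (cmod (p2 x z))\<^sup>2" for x z
    unfolding Q0_def cmod_power2 by (simp add: power2_eq_square)
  have r3: "Re (Q3 x z) = (cmod (p1 x z))\<^sup>2 - (cmod (p2 x z))\<^sup>2" for x z
    unfolding Q3_def cmod_power2 by (simp add: power2_eq_square)
  have S0e: "S0 p1 p2 = (\<lambda>z. LINT x|lborel. Re (Q0 x z))"
    unfolding S0_def by (intro ext) (simp add: r0)
  have S1e: "S1 p1 p2 = (\<lambda>z. LINT x|lborel. Re (Q1 x z))"
    unfolding S1_def Q1_def by (intro ext) simp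
  have S2e: "S2 p1 p2 = (\<lambda>z. LINT x|lborel. Re (Q2 x z))"
    unfolding S2_def Q2_def by (intro ext) simp
  have S3e: "S3 p1 p2 = (\<lambda>z. LINT x|lborel. Re (Q3 x z))"
    unfolding S3_def by (intro ext) (simp add: r3)

  have dQ0: "((\<lambda>z. Q0 x z) has_vector_derivative Q0' x z) (at z)" for x z
    unfolding Q0_def Q0'_def by (intro has_vector_derivative_add has_vector_derivative_mult has_vector_derivative_cnj dz1 dz2)
  have dQ1: "((\<lambda>z. Q1 x z) has_vector_derivative Q1' x z) (at z)" for x z
    unfolding Q1_def Q1'_def by (intro has_vector_derivative_add has_vector_derivative_mult has_vector_derivative_cnj dz1 dz2)
  have dQ2: "((\<lambda>z. Q2 x z) has_vector_derivative Q2' x z) (at z)" for x z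
    unfolding Q2_def Q2'_def by (intro has_vector_derivative_mult_right has_vector_derivative_diff has_vector_derivative_add has_vector_derivative_mult has_vector_derivative_cnj dz1 dz2)
  have dQ3: "((\<lambda>z. Q3 x z) has_vector_derivative Q3' x z) (at z)" for x z
    unfolding Q3_def Q3'_def by (intro has_vector_derivative_diff has_vector_derivative_add has_vector_derivative_mult has_vector_derivative_cnj dz1 dz2)
  have dG0: "((\<lambda>x. G0 x z) has_vector_derivative g0 x z) (at x)" for x z
    unfolding G0_def g0_def by (intro has_vector_derivative_add has_vector_derivative_mult has_vector_derivative_cnj dx1 dx2 dxx1 dxx2)
  have dG1: "((\<lambda>x. G1 x z) has_vector_derivative g1 x z) (at x)" for x z
    unfolding G1_def g1_def by (intro has_vector_derivative_diff has_vector_derivative_mult has_vector_derivative_cnj dx1 dx2 dxx1 dxx2)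
  have dG3: "((\<lambda>x. G3 x z) has_vector_derivative g3 x z) (at x)" for x z
    unfolding G3_def g3_def by (intro has_vector_derivative_diff has_vector_derivative_add has_vector_derivative_mult has_vector_derivative_cnj dx1 dx2 dxx1 dxx2)

  have cQ: "continuous_on UNIV (\<lambda>x. Q0 x z)" "continuous_on UNIV (\<lambda>x. Q1 x z)"
    "continuous_on UNIV (\<lambda>x. Q2 x z)" "continuous_on UNIV (\<lambda>x. Q3 x z)"
    "continuous_on UNIV (\<lambda>x. Q0' x z)" "continuous_on UNIV (\<lambda>x. Q1' x z)"
    "continuous_on UNIV (\<lambda>x. Q2' x z)" "continuous_on UNIV (\<lambda>x. Q3' x z)"
    "continuous_on UNIV (\<lambda>x. g0 x z)" "continuous_on UNIV (\<lambda>x. g1 x z)" "continuous_on UNIV (\<lambda>x. g3 x z)" for z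
    unfolding Q0_def Q1_def Q2_def Q3_def Q0'_def Q1'_def Q2'_def Q3'_def g0_def g1_def g3_def
    by (intro continuous_intros conts)+
  have dd: "DEC {a..b} Q0" "DEC {a..b} Q1" "DEC {a..b} Q2" "DEC {a..b} Q3"
    "DEC {a..b} Q0'" "DEC {a..b} Q1'" "DEC {a..b} Q2'" "DEC {a..b} Q3'"
    "DEC {a..b} g0" "DEC {a..b} g1" "DEC {a..b} g3"
    "DEC {a..b} G0" "DEC {a..b} G1" "DEC {a..b} G3" for a b
    unfolding Q0_def Q1_def Q2_def Q3_def Q0'_def Q1'_def Q2'_def Q3'_def g0_def g1_def g3_def G0_def G1_def G3_def
    by (intro DECI decs)+
  have ds: "DEC {z} g0" "DEC {z} g1" "DEC {z} g3" "DEC {z} G0" "DEC {z} G1" "DEC {z} G3" for z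
    using dd[of z z] by simp_all
  have fl0: "(LINT x|lborel. Im (g0 x z)) = 0" for z by (rule flux(2)[OF dG0 cQ(9) ds(1) ds(4)])
  have fl1: "(LINT x|lborel. Im (g1 x z)) = 0" "(LINT x|lborel. Re (g1 x z)) = 0" for z
    by (rule flux(2)[OF dG1 cQ(10) ds(2) ds(5)], rule flux(3)[OF dG1 cQ(10) ds(2) ds(5)])
  have fl3: "(LINT x|lborel. Im (g3 x z)) = 0" for z by (rule flux(2)[OF dG3 cQ(11) ds(3) ds(6)])
  have iQ: "integrable lborel (\<lambda>x. Re (Q0 x z))" "integrable lborel (\<lambda>x. Re (Q2 x z))"
    "integrable lborel (\<lambda>x. Re (Q3 x z))" "integrable lborel (\<lambda>x. Im (g0 x z))"
    "integrable lborel (\<lambda>x. Im (g1 x z))" "integrable lborel (\<lambda>x. Re (g1 x z))"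
    "integrable lborel (\<lambda>x. Im (g3 x z))" for z
    by (rule DEC_Re_integrable[OF dd(1) cQ(1)] DEC_Re_integrable[OF dd(3) cQ(3)] DEC_Re_integrable[OF dd(4) cQ(4)]
      DEC_Re_integrable[OF dd(9) cQ(9)] DEC_Re_integrable[OF dd(10) cQ(10)] DEC_Re_integrable[OF dd(11) cQ(11)])+

  have i0: "Re (Q0' x z) = 2*\<gamma>*Re (Q3 x z) - 2 * Im (g0 x z)" for x z
    unfolding r3 Q0'_def g0_def by (rule id0[OF p1z_eq p2z_eq])
  have i1: "Re (Q1' x z) = - 2 * Im (g1 x z)" for x z
    unfolding Q1'_def g1_def by (rule id1[OF p1z_eq p2z_eq])
  have i2: "Re (Q2' x z) = - 2 * \<kappa> * Re (Q3 x z) - 2 * Re (g1 x z)" for x z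
    unfolding r3 Q2'_def g1_def by (rule id2[OF p1z_eq p2z_eq])
  have i3: "Re (Q3' x z) = 2*\<gamma>*Re (Q0 x z) + 2 * \<kappa> * Re (Q2 x z) - 2 * Im (g3 x z)" for x z
    unfolding r0 Q3'_def g3_def Q2_def by (rule id3[OF p1z_eq p2z_eq])

  have D0: "(S0 p1 p2 has_real_derivative 2 * \<gamma> * S3 p1 p2 z) (at z)" for z
  proof -
    have "(LINT x|lborel. Re (Q0' x z)) = (LINT x|lborel. 2*\<gamma>*Re (Q3 x z) - 2 * Im (g0 x z))"
      by (simp add: i0)
    also have "\<dots> = 2 * \<gamma> * S3 p1 p2 z"
      using iQ[of z] fl0[of z] by (simp add: S3e integral_diff)
    finally show ?thesis using deriv_Re_int[OF dQ0 cQ(1) cQ(5) dd(1) dd(5), of z] S0e by simp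
  qed
  have D1: "(S1 p1 p2 has_real_derivative 0) (at z)" for z
  proof -
    have "(LINT x|lborel. Re (Q1' x z)) = (LINT x|lborel. - 2 * Im (g1 x z))"
      by (simp add: i1)
    also have "\<dots> = 0"
      using iQ[of z] fl1[of z] by simp
    finally show ?thesis using deriv_Re_int[OF dQ1 cQ(2) cQ(6) dd(2) dd(6), of z] S1e by simp
  qed
  have D2: "(S2 p1 p2 has_real_derivative - 2 * \<kappa> * S3 p1 p2 z) (at z)" for z
  proof -
    have "(LINT x|lborel. Re (Q2' x z)) = (LINT x|lborel. - 2 * \<kappa> * Re (Q3 x z) - 2 * Re (g1 x z))"
      by (simp add: i2)
    also have "\<dots> = - 2 * \<kappa> * S3 p1 p2 z"
      using iQ[of z] fl1[of z] by (simp add: S3e integral_diff)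
    finally show ?thesis using deriv_Re_int[OF dQ2 cQ(3) cQ(7) dd(3) dd(7), of z] S2e by simp
  qed
  have D3: "(S3 p1 p2 has_real_derivative 2 * \<gamma> * S0 p1 p2 z + 2 * \<kappa> * S2 p1 p2 z) (at z)" for z
  proof -
    have "(LINT x|lborel. Re (Q3' x z)) = (LINT x|lborel. 2*\<gamma>*Re (Q0 x z) + 2 * \<kappa> * Re (Q2 x z) - 2 * Im (g3 x z))"
      by (simp add: i3)
    also have "\<dots> = 2 * \<gamma> * S0 p1 p2 z + 2 * \<kappa> * S2 p1 p2 z"
      using iQ[of z] fl3[of z] by (simp add: S0e S2e integral_diff integral_add)
    finally show ?thesis using deriv_Re_int[OF dQ3 cQ(4) cQ(8) dd(4) dd(8), of z] S3e by simp
  qed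
  show ?thesis using D0 D1 D2 D3 ode_part[OF params D0 D1 D2 D3] by blast
qed

end
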